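(* Let $X,Y$ be Hilbert spaces, $U:=X\times Y$, $K\in\mathcal{L}(X;Y)$, and let $\partial G:X\rightrightarrows X$ and $\partial F^*:Y\rightrightarrows Y$ be set-valued maps. Define $H:U\rightrightarrows U$ by $H(x,y):=\big(\partial G(x)+K^*y\big)\times\big(\partial F^*(y)-Kx\big)$. Fix $i\in\mathbb{N}$, $\tau_i,\sigma_{i+1},\phi_i,\psi_{i+1}>0$, $\gamma,\rho\ge0$, and set \[ W_{i+1}:=\begin{pmatrix}\tau_iI&0\\0&\sigma_{i+1}I\end{pmatrix},\quad Z_{i+1}:=\begin{pmatrix}\phi_iI&0\\0&\psi_{i+1}I\end{pmatrix},\quad \Xi_{i+1}:=\begin{pmatrix}\gamma\tau_iI&2\tau_iK^*\\-2\sigma_{i+1}K&\rho\sigma_{i+1}I\end{pmatrix}. \] Let $Z_{i+2},M_{i+2}\in\mathcal{L}(U;U)$ with $Z_{i+2}M_{i+2}$ self-adjoint and positive semidefinite. Let $\hat u\in H^{-1}(0)$ and suppose there is a neighbourhood $\mathcal{U}$ of $\hat u$ such that for all $u=(x,y)\in\mathcal{U}$, $q\in\partial G(x)$, $z\in\partial F^*(y)$, \[ \inf_{(x^*,y^* )\in H^{-1}(0)}\Big[\langle q+K^*y^*,x-x^*\rangle-\tfrac{\gamma}{2}\|x-x^*\|^2\Big]\ge0,\qquad \inf_{(x^*,y^* )\in H^{-1}(0)}\Big[\langle z-Kx^*,y-y^*\rangle-\tfrac{\rho}{2}\|y-y^*\|^2\Big]\ge0. \] Then $H$ is $(Z_{i+1}\Xi_{i+1},2Z_{i+1}W_{i+1},Z_{i+2}M_{i+2})$-partially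 strongly submonotone at $(\hat u,0)$.
   Context: For $T\in\mathcal{L}(U;U)$: $\langle x,z\rangle_T:=\langle Tx,z\rangle$, $\|x\|^2_T:=\langle Tx,x\rangle$, $\operatorname{dist}^2_T(z,A):=\inf_{u\in A}\|z-u\|^2_T$. For $\Xi,N,M\in\mathcal{L}(U;U)$ with $M\ge0$, a map $T:U\rightrightarrows U$ is $(\Xi,N,M)$-partially strongly submonotone at $(\hat u,\hat w)\in\operatorname{graph}T$ if there is a neighbourhood $\mathcal{U}\ni\hat u$ such that $\inf_{u^*\in T^{-1}(\hat w)}(\langle w-\hat w,u-u^*\rangle_N+\|u-u^*\|^2_{M-\Xi})\ge\operatorname{dist}^2_M(u,T^{-1}(\hat w))$ for all $u\in\mathcal{U}$, $w\in T(u)$. Note that for $(x^*,y^* )\in H^{-1}(0)$ one has $-K^*y^*\in\partial G(x^* )$ and $Kx^*\in\partial F^*(y^* )$. *)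

theory Defs
  imports "HOL-Analysis.Analysis"
begin

definition winner :: "('u::real_inner \<Rightarrow> 'u) \<Rightarrow> 'u \<Rightarrow> 'u \<Rightarrow> real" where
  "winner T x z = inner (T x) z"

definition wnorm2 :: "('u::real_inner \<Rightarrow> 'u) \<Rightarrow> 'u \<Rightarrow> real" where
  "wnorm2 T x = inner (T x) x"

text \<open>Infimum taken in the extended reals (so it is always well defined).\<close>
definition wdist2 :: "('u::real_inner \<Rightarrow> 'u) \<Rightarrow> 'u \<Rightarrow> 'u set \<Rightarrow> ereal" where
  "wdist2 T z A = (INF u\<in>A. ereal (wnorm2 T (z - u)))"

definition psd_op :: "('u::real_inner \<Rightarrow> 'u) \<Rightarrow> bool" where
  "psd_op M \<longleftrightarrow> (\<forall>u. inner (M u) u \<ge> 0)"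

definition selfadjoint_op :: "('u::real_inner \<Rightarrow> 'u) \<Rightarrow> bool" where
  "selfadjoint_op M \<longleftrightarrow> (\<forall>u v. inner (M u) v = inner u (M v))"

definition partially_strongly_submonotone ::
  "('u::real_inner \<Rightarrow> 'u) \<Rightarrow> ('u \<Rightarrow> 'u) \<Rightarrow> ('u \<Rightarrow> 'u) \<Rightarrow> ('u \<Rightarrow> 'u set) \<Rightarrow> 'u \<Rightarrow> 'u \<Rightarrow> bool" where
  "partially_strongly_submonotone Xi N M T uh wh \<longleftrightarrow>
     bounded_linear Xi \<and> bounded_linear N \<and> bounded_linear M \<and> psd_op M \<and>
     wh \<in> T uh \<and>
     (\<exists>V. open V \<and> uh \<in> V \<and>
        (\<forall>u\<in>V. \<forall>w\<in>T u.
           (INF us\<in>{v. wh \<in> T v}. ereal (winner N (w - wh) (u - us) + wnorm2 (\<lambda>v. M v - Xi v) (u - us)))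
             \<ge> wdist2 M u {v. wh \<in> T v}))"

definition Hop :: "('a::real_inner \<Rightarrow> 'a set) \<Rightarrow> ('b::real_inner \<Rightarrow> 'b set) \<Rightarrow> ('a \<Rightarrow> 'b) \<Rightarrow> ('b \<Rightarrow> 'a)
                   \<Rightarrow> 'a \<times> 'b \<Rightarrow> ('a \<times> 'b) set" where
  "Hop dG dFs K Ks = (\<lambda>(x, y). {(q + Ks y, z - K x) | q z. q \<in> dG x \<and> z \<in> dFs y})"

definition diag_op :: "real \<Rightarrow> real \<Rightarrow> 'a::real_vector \<times> 'b::real_vector \<Rightarrow> 'a \<times> 'b" where
  "diag_op a b = (\<lambda>(x, y). (a *\<^sub>R x, b *\<^sub>R y))"

definition Xi_op :: "real \<Rightarrow> real \<Rightarrow> real \<Rightarrow> real \<Rightarrow> ('a::real_vector \<Rightarrow> 'b::real_vector) \<Rightarrow> ('b \<Rightarrow> 'a)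
                     \<Rightarrow> 'a \<times> 'b \<Rightarrow> 'a \<times> 'b" where
  "Xi_op \<gamma> \<rho> \<tau> \<sigma> K Ks = (\<lambda>(x, y). ((\<gamma> * \<tau>) *\<^sub>R x + (2 * \<tau>) *\<^sub>R Ks y,
                                    - (2 * \<sigma>) *\<^sub>R K x + (\<rho> * \<sigma>) *\<^sub>R y))"

end

theory Submission
  imports Defs
begin


lemma adj_add: fixes K :: "'a::real_inner \<Rightarrow> 'b::real_inner"
  assumes K: "bounded_linear K" and Ks: "\<And>x y. inner (K x) y = inner x (Ks y)"
  shows "Ks (a + b) = Ks a + Ks b"
proof -
  have "\<forall>x. inner x (Ks (a + b) - (Ks a + Ks b)) = 0"
    by (simp add: inner_diff_right inner_add_right flip: Ks)
  then show ?thesis by (metis eq_iff_diff_eq_0 inner_eq_zero_iff)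
qed

lemma adj_scale: fixes K :: "'a::real_inner \<Rightarrow> 'b::real_inner"
  assumes K: "bounded_linear K" and Ks: "\<And>x y. inner (K x) y = inner x (Ks y)"
  shows "Ks (c *\<^sub>R a) = c *\<^sub>R Ks a"
proof -
  have "\<forall>x. inner x (Ks (c *\<^sub>R a) - c *\<^sub>R Ks a) = 0"
    by (simp add: inner_diff_right flip: Ks)
  then show ?thesis by (metis eq_iff_diff_eq_0 inner_eq_zero_iff)
qed

lemma adj_bl: fixes K :: "'a::real_inner \<Rightarrow> 'b::real_inner"
  assumes K: "bounded_linear K" and Ks: "\<And>x y. inner (K x) y = inner x (Ks y)"
  shows "bounded_linear Ks"
proof
  show "Ks (a + b) = Ks a + Ks b" for a b using adj_add[OF K Ks] .
  show "Ks (c *\<^sub>R a) = c *\<^sub>R Ks a" for c a using adj_scale[OF K Ks] .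
  obtain B where B: "\<And>x. norm (K x) \<le> norm x * B" "B \<ge> 0"
    using bounded_linear.nonneg_bounded[OF K] by blast
  show "\<exists>B. \<forall>y. norm (Ks y) \<le> norm y * B"
  proof (intro exI allI)
    fix y
    have "(norm (Ks y))^2 = inner (K (Ks y)) y" by (simp add: Ks power2_norm_eq_inner)
    also have "\<dots> \<le> norm (K (Ks y)) * norm y" by (rule norm_cauchy_schwarz)
    also have "\<dots> \<le> norm (Ks y) * B * norm y" using B by (simp add: mult_right_mono)
    finally have h: "norm (Ks y) * norm (Ks y) \<le> norm (Ks y) * (norm y * B)"
      by (simp add: power2_eq_square mult_ac)
    show "norm (Ks y) \<le> norm y * B"
    proof (cases "norm (Ks y) = 0")
      case True then show ?thesis using B by simp
    next
      case False then show ?thesis using h by (simp add: mult_le_cancel_left)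
    qed
  qed
qed

theorem proposition6p1:
  fixes K :: "'a::{real_inner, complete_space} \<Rightarrow> 'b::{real_inner, complete_space}"
    and Ks :: "'b \<Rightarrow> 'a"
    and dG :: "'a \<Rightarrow> 'a set" and dFs :: "'b \<Rightarrow> 'b set"
    and \<tau> \<sigma> \<phi> \<psi> \<gamma> \<rho> :: real
    and Z2 M2 :: "'a \<times> 'b \<Rightarrow> 'a \<times> 'b"
    and uh :: "'a \<times> 'b"
  assumes K: "bounded_linear K"
    and Ks: "\<And>x y. inner (K x) y = inner x (Ks y)"
    and pos: "\<tau> > 0" "\<sigma> > 0" "\<phi> > 0" "\<psi> > 0"
    and nonneg: "\<gamma> \<ge> 0" "\<rho> \<ge> 0"
    and Z2: "bounded_linear Z2" and M2: "bounded_linear M2"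
    and ZM_sa: "selfadjoint_op (Z2 \<circ> M2)" and ZM_psd: "psd_op (Z2 \<circ> M2)"
    and uh: "0 \<in> Hop dG dFs K Ks uh"
    and nbhd: "\<exists>V. open V \<and> uh \<in> V \<and>
      (\<forall>x y. (x, y) \<in> V \<longrightarrow>
        (\<forall>q\<in>dG x. (INF p\<in>{p. 0 \<in> Hop dG dFs K Ks p}.
              ereal (inner (q + Ks (snd p)) (x - fst p) - \<gamma> / 2 * (norm (x - fst p))\<^sup>2)) \<ge> 0) \<and>
        (\<forall>z\<in>dFs y. (INF p\<in>{p. 0 \<in> Hop dG dFs K Ks p}.
              ereal (inner (z - K (fst p)) (y - snd p) - \<rho> / 2 * (norm (y - snd p))\<^sup>2)) \<ge> 0))"
  shows "partially_strongly_submonotone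
           (diag_op \<phi> \<psi> \<circ> Xi_op \<gamma> \<rho> \<tau> \<sigma> K Ks)
           (\<lambda>u. 2 *\<^sub>R diag_op \<phi> \<psi> (diag_op \<tau> \<sigma> u))
           (Z2 \<circ> M2)
           (Hop dG dFs K Ks) uh 0"
proof -
  have KsL: "bounded_linear Ks" by (rule adj_bl[OF K Ks])
  interpret Kl: bounded_linear K by (rule K)
  interpret Ksl: bounded_linear Ks by (rule KsL)
  let ?S = "{v. 0 \<in> Hop dG dFs K Ks v}"
  obtain V where V: "open V" "uh \<in> V" and VV: "\<And>x y. (x, y) \<in> V \<Longrightarrow>
        (\<forall>q\<in>dG x. (INF p\<in>?S.
              ereal (inner (q + Ks (snd p)) (x - fst p) - \<gamma> / 2 * (norm (x - fst p))\<^sup>2)) \<ge> 0) \<and>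
        (\<forall>z\<in>dFs y. (INF p\<in>?S.
              ereal (inner (z - K (fst p)) (y - snd p) - \<rho> / 2 * (norm (y - snd p))\<^sup>2)) \<ge> 0)"
    using nbhd by blast
  have bl1: "bounded_linear (diag_op \<phi> \<psi> \<circ> Xi_op \<gamma> \<rho> \<tau> \<sigma> K Ks)"
    unfolding diag_op_def Xi_op_def o_def case_prod_beta fst_conv snd_conv
    by (intro bounded_linear_Pair bounded_linear_add bounded_linear_const_scaleR
        bounded_linear_compose[OF KsL] bounded_linear_compose[OF K]
        bounded_linear_fst bounded_linear_snd bounded_linear_minus)
  have bl2: "bounded_linear (\<lambda>u. 2 *\<^sub>R diag_op \<phi> \<psi> (diag_op \<tau> \<sigma> u))"
    unfolding diag_op_def o_def case_prod_beta fst_conv snd_conv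
    by (intro bounded_linear_Pair bounded_linear_add bounded_linear_const_scaleR
        bounded_linear_fst bounded_linear_snd)
  have bl3: "bounded_linear (Z2 \<circ> M2)" using bounded_linear_compose[OF Z2 M2] by (simp add: o_def)
  have key: "ereal (wnorm2 (Z2 \<circ> M2) (u - p)) \<le>
     ereal (winner (\<lambda>u. 2 *\<^sub>R diag_op \<phi> \<psi> (diag_op \<tau> \<sigma> u)) (w - 0) (u - p) +
        wnorm2 (\<lambda>v. (Z2 \<circ> M2) v - (diag_op \<phi> \<psi> \<circ> Xi_op \<gamma> \<rho> \<tau> \<sigma> K Ks) v) (u - p))"
    if u: "u \<in> V" and w: "w \<in> Hop dG dFs K Ks u" and p: "p \<in> ?S" for u w p
  proof -
    obtain x y where uxy: "u = (x, y)" by (cases u)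
    obtain xs ys where pxy: "p = (xs, ys)" by (cases p)
    obtain q z where qz: "q \<in> dG x" "z \<in> dFs y" "w = (q + Ks y, z - K x)"
      using w by (auto simp: Hop_def uxy)
    have VVx: "(x, y) \<in> V" using u uxy by simp
    have A0: "ereal (inner (q + Ks ys) (x - xs) - \<gamma> / 2 * (norm (x - xs))\<^sup>2) \<ge> 0"
    proof -
      have i: "(INF p\<in>?S. ereal (inner (q + Ks (snd p)) (x - fst p) - \<gamma> / 2 * (norm (x - fst p))\<^sup>2)) \<ge> 0"
        using conjunct1[OF VV[OF VVx]] qz(1) by (rule bspec)
      have "(INF p\<in>?S. ereal (inner (q + Ks (snd p)) (x - fst p) - \<gamma> / 2 * (norm (x - fst p))\<^sup>2)) \<le> (\<lambda>p. ereal (inner (q + Ks (snd p)) (x - fst p) - \<gamma> / 2 * (norm (x - fst p))\<^sup>2)) p"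
        by (rule INF_lower[OF p])
      from order_trans[OF i this] show ?thesis by (simp add: pxy)
    qed
    have B0: "ereal (inner (z - K xs) (y - ys) - \<rho> / 2 * (norm (y - ys))\<^sup>2) \<ge> 0"
    proof -
      have i: "(INF p\<in>?S. ereal (inner (z - K (fst p)) (y - snd p) - \<rho> / 2 * (norm (y - snd p))\<^sup>2)) \<ge> 0"
        using conjunct2[OF VV[OF VVx]] qz(2) by (rule bspec)
      have "(INF p\<in>?S. ereal (inner (z - K (fst p)) (y - snd p) - \<rho> / 2 * (norm (y - snd p))\<^sup>2)) \<le> (\<lambda>p. ereal (inner (z - K (fst p)) (y - snd p) - \<rho> / 2 * (norm (y - snd p))\<^sup>2)) p"
        by (rule INF_lower[OF p])
      from order_trans[OF i this] show ?thesis by (simp add: pxy)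
    qed
    define A where "A = inner (q + Ks ys) (x - xs) - \<gamma> / 2 * (norm (x - xs))\<^sup>2"
    define B where "B = inner (z - K xs) (y - ys) - \<rho> / 2 * (norm (y - ys))\<^sup>2"
    have A: "A \<ge> 0" using A0 A_def by simp
    have B: "B \<ge> 0" using B0 B_def by simp
    have e1: "Ks y = Ks ys + Ks (y - ys)" by (simp add: Ksl.diff)
    have e2: "K x = K xs + K (x - xs)" by (simp add: Kl.diff)
    have e3: "inner (K (x - xs)) (y - ys) = inner (x - xs) (Ks (y - ys))" by (rule Ks)
    define dx where "dx = x - xs"
    define dy where "dy = y - ys"
    have L: "winner (\<lambda>u. 2 *\<^sub>R diag_op \<phi> \<psi> (diag_op \<tau> \<sigma> u)) (w - 0) (u - p)
        = 2 * \<phi> * \<tau> * inner (q + Ks y) dx + 2 * \<psi> * \<sigma> * inner (z - K x) dy"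
      by (simp add: winner_def diag_op_def uxy pxy qz(3) dx_def dy_def)
    have R: "inner ((diag_op \<phi> \<psi> \<circ> Xi_op \<gamma> \<rho> \<tau> \<sigma> K Ks) (u - p)) (u - p)
        = \<phi> * \<gamma> * \<tau> * inner dx dx + 2 * \<phi> * \<tau> * inner (Ks dy) dx
          - 2 * \<psi> * \<sigma> * inner (K dx) dy + \<psi> * \<rho> * \<sigma> * inner dy dy"
      by (simp add: diag_op_def Xi_op_def uxy pxy dx_def dy_def inner_add_left algebra_simps)
    have i1: "inner (q + Ks y) dx = inner (q + Ks ys) dx + inner (Ks dy) dx"
      by (simp add: dy_def Ksl.diff inner_add_left inner_diff_left)
    have i2: "inner (z - K x) dy = inner (z - K xs) dy - inner (K dx) dy"
      by (simp add: dx_def Kl.diff inner_add_left inner_diff_left)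
    have i3: "inner (K dx) dy = inner (Ks dy) dx" using Ks[of dx dy] by (simp add: inner_commute)
    have nA: "A = inner (q + Ks ys) dx - \<gamma> / 2 * inner dx dx"
      by (simp add: A_def dx_def power2_norm_eq_inner)
    have nB: "B = inner (z - K xs) dy - \<rho> / 2 * inner dy dy"
      by (simp add: B_def dy_def power2_norm_eq_inner)
    have "winner (\<lambda>u. 2 *\<^sub>R diag_op \<phi> \<psi> (diag_op \<tau> \<sigma> u)) (w - 0) (u - p)
          - inner ((diag_op \<phi> \<psi> \<circ> Xi_op \<gamma> \<rho> \<tau> \<sigma> K Ks) (u - p)) (u - p)
        = 2 * \<phi> * \<tau> * A + 2 * \<psi> * \<sigma> * B"
      unfolding L R i1 i2 i3 nA nB by (simp add: algebra_simps)
    moreover have "2 * \<phi> * \<tau> * A + 2 * \<psi> * \<sigma> * B \<ge> 0" using A B pos by simp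
    ultimately show ?thesis
      by (simp add: wnorm2_def inner_diff_left)
  qed
  show ?thesis
    unfolding partially_strongly_submonotone_def
  proof (intro conjI bl1 bl2 bl3 exI[of _ V] V ballI)
    show "psd_op (Z2 \<circ> M2)" by (rule ZM_psd)
    show "0 \<in> Hop dG dFs K Ks uh" by (rule uh)
    fix u w assume u: "u \<in> V" and w: "w \<in> Hop dG dFs K Ks u"
    show "wdist2 (Z2 \<circ> M2) u ?S \<le> (INF us\<in>?S. ereal (winner (\<lambda>u. 2 *\<^sub>R diag_op \<phi> \<psi> (diag_op \<tau> \<sigma> u)) (w - 0) (u - us) +
        wnorm2 (\<lambda>v. (Z2 \<circ> M2) v - (diag_op \<phi> \<psi> \<circ> Xi_op \<gamma> \<rho> \<tau> \<sigma> K Ks) v) (u - us)))"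
      unfolding wdist2_def
      by (rule INF_mono) (use key[OF u w] in blast)
  qed
qed

end
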